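(* Let $\rho : \mathfrak g \to \mathrm{End}(W)$ be a finite-dimensional representation of a complex semisimple Lie algebra $\mathfrak g$, and $\mathfrak h$ a Cartan subalgebra. Let $\lambda$ be a weight of $\mathfrak h$ in $W$ and $W_\lambda = \{w \in W : Hw = \lambda(H) w \ \forall H \in \mathfrak h\}$. If there exists a co-root $H_\alpha$ such that $\lambda(H_\alpha)$ is an even nonzero integer, then $W_\lambda \otimes \mathfrak h$ is contained in the $\mathfrak g$-submodule of $W \otimes \mathfrak g$ generated by the $\mathfrak g$-overshears.
   Context: $W \otimes \mathfrak g$ is a $\mathfrak g$-module via $(\rho\otimes \mathrm{ad})(\xi)(w\otimes \eta) = \rho(\xi)w \otimes \eta + w \otimes [\xi,\eta]$. An element $w \otimes \xi$ ($w\in W$, $\xi \in \mathfrak g$) is a $\mathfrak g$-overshear if $\rho(\xi)^2 w = 0$. For a root $\alpha$, $H_\alpha\in\mathfrak h$ is the co-root, i.e. there are $E_\alpha \in \mathfrak g_\alpha$, $F_\alpha\in\mathfrak g_{-\alpha}$ with $[H_\alpha,E_\alpha]=2E_\alpha$, $[H_\alpha,F_\alpha]=-2F_\alpha$, $[E_\alpha,F_\alpha]=H_\alpha$. *)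

theory Defs
  imports "HOL-Analysis.Analysis"
begin

text \<open>Conventions. A finite-dimensional complex Lie algebra g is modelled (after a choice
of basis) as the coordinate space complex^'m with a bracket br; a finite-dimensional
representation space W is complex^'n. The tensor product W (x) g is complex^'m^'n, with
pure tensors w (x) xi given by the outer product.\<close>

type_synonym ('m) lie_bracket = "complex^'m \<Rightarrow> complex^'m \<Rightarrow> complex^'m"

definition lie_algebra :: "('m::finite) lie_bracket \<Rightarrow> bool" where
  "lie_algebra br \<longleftrightarrow>
     (\<forall>x. Vector_Spaces.linear (*s) (*s) (br x)) \<and>
     (\<forall>y. Vector_Spaces.linear (*s) (*s) (\<lambda>x. br x y)) \<and>
     (\<forall>x. br x x = 0) \<and>
     (\<forall>x y z. br x (br y z) + br y (br z x) + br z (br x y) = 0)"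

definition lie_subalgebra :: "('m::finite) lie_bracket \<Rightarrow> (complex^'m) set \<Rightarrow> bool" where
  "lie_subalgebra br h \<longleftrightarrow> vec.subspace h \<and> (\<forall>x\<in>h. \<forall>y\<in>h. br x y \<in> h)"

definition lie_ideal :: "('m::finite) lie_bracket \<Rightarrow> (complex^'m) set \<Rightarrow> bool" where
  "lie_ideal br I \<longleftrightarrow> vec.subspace I \<and> (\<forall>x. \<forall>y\<in>I. br x y \<in> I)"

primrec derived_series :: "('m::finite) lie_bracket \<Rightarrow> (complex^'m) set \<Rightarrow> nat \<Rightarrow> (complex^'m) set" where
  "derived_series br I 0 = I"
| "derived_series br I (Suc k) =
     vec.span {br x y | x y. x \<in> derived_series br I k \<and> y \<in> derived_series br I k}"

definition solvable_lie :: "('m::finite) lie_bracket \<Rightarrow> (complex^'m) set \<Rightarrow> bool" where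
  "solvable_lie br I \<longleftrightarrow> (\<exists>k. derived_series br I k = {0})"

text \<open>Semisimple: no nonzero solvable ideals (radical is zero).\<close>
definition semisimple :: "('m::finite) lie_bracket \<Rightarrow> bool" where
  "semisimple br \<longleftrightarrow> lie_algebra br \<and>
     (\<forall>I. lie_ideal br I \<and> solvable_lie br I \<longrightarrow> I = {0})"

primrec lower_central :: "('m::finite) lie_bracket \<Rightarrow> (complex^'m) set \<Rightarrow> nat \<Rightarrow> (complex^'m) set" where
  "lower_central br h 0 = h"
| "lower_central br h (Suc k) =
     vec.span {br x y | x y. x \<in> h \<and> y \<in> lower_central br h k}"

definition nilpotent_lie :: "('m::finite) lie_bracket \<Rightarrow> (complex^'m) set \<Rightarrow> bool" where
  "nilpotent_lie br h \<longleftrightarrow> (\<exists>k. lower_central br h k = {0})"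

text \<open>Cartan subalgebra: nilpotent self-normalizing subalgebra.\<close>
definition cartan_subalgebra :: "('m::finite) lie_bracket \<Rightarrow> (complex^'m) set \<Rightarrow> bool" where
  "cartan_subalgebra br h \<longleftrightarrow> lie_subalgebra br h \<and> nilpotent_lie br h \<and>
     {x. \<forall>y\<in>h. br x y \<in> h} = h"

definition root_space :: "('m::finite) lie_bracket \<Rightarrow> (complex^'m) set \<Rightarrow> (complex^'m \<Rightarrow> complex) \<Rightarrow> (complex^'m) set" where
  "root_space br h \<alpha> = {x. \<forall>H\<in>h. br H x = \<alpha> H *s x}"

definition is_root :: "('m::finite) lie_bracket \<Rightarrow> (complex^'m) set \<Rightarrow> (complex^'m \<Rightarrow> complex) \<Rightarrow> bool" where
  "is_root br h \<alpha> \<longleftrightarrow> (\<exists>H\<in>h. \<alpha> H \<noteq> 0) \<and> root_space br h \<alpha> \<noteq> {0}"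

text \<open>Ha is the co-root of the root alpha.\<close>
definition is_coroot :: "('m::finite) lie_bracket \<Rightarrow> (complex^'m) set \<Rightarrow> (complex^'m \<Rightarrow> complex) \<Rightarrow> complex^'m \<Rightarrow> bool" where
  "is_coroot br h \<alpha> Ha \<longleftrightarrow> is_root br h \<alpha> \<and> Ha \<in> h \<and>
     (\<exists>E F. E \<in> root_space br h \<alpha> \<and> F \<in> root_space br h (\<lambda>H. - \<alpha> H) \<and>
        br Ha E = 2 *s E \<and> br Ha F = (-2) *s F \<and> br E F = Ha)"

definition representation :: "('m::finite) lie_bracket \<Rightarrow> (complex^'m \<Rightarrow> complex^'n::finite \<Rightarrow> complex^'n) \<Rightarrow> bool" where
  "representation br \<rho> \<longleftrightarrow>
     (\<forall>\<xi>. Vector_Spaces.linear (*s) (*s) (\<rho> \<xi>)) \<and>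
     (\<forall>w. Vector_Spaces.linear (*s) (*s) (\<lambda>\<xi>. \<rho> \<xi> w)) \<and>
     (\<forall>\<xi> \<eta> w. \<rho> (br \<xi> \<eta>) w = \<rho> \<xi> (\<rho> \<eta> w) - \<rho> \<eta> (\<rho> \<xi> w))"

definition weight_space :: "(complex^'m::finite \<Rightarrow> complex^'n::finite \<Rightarrow> complex^'n) \<Rightarrow> (complex^'m) set \<Rightarrow> (complex^'m \<Rightarrow> complex) \<Rightarrow> (complex^'n) set" where
  "weight_space \<rho> h lam = {w. \<forall>H\<in>h. \<rho> H w = lam H *s w}"

definition is_weight :: "(complex^'m::finite \<Rightarrow> complex^'n::finite \<Rightarrow> complex^'n) \<Rightarrow> (complex^'m) set \<Rightarrow> (complex^'m \<Rightarrow> complex) \<Rightarrow> bool" where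
  "is_weight \<rho> h lam \<longleftrightarrow> weight_space \<rho> h lam \<noteq> {0}"

text \<open>Pure tensor w (x) xi in W (x) g = complex^'m^'n.\<close>
definition tensor :: "complex^'n::finite \<Rightarrow> complex^'m::finite \<Rightarrow> complex^'m^'n" where
  "tensor w \<xi> = (\<chi> i j. w$i * \<xi>$j)"

text \<open>The action (rho (x) ad)(xi) on W (x) g, i.e. the linear extension of
  w (x) eta |-> rho(xi) w (x) eta + w (x) [xi, eta], written via the decomposition
  T = sum_j (column j of T) (x) e_j.\<close>
definition tensor_act :: "('m::finite) lie_bracket \<Rightarrow> (complex^'m \<Rightarrow> complex^'n::finite \<Rightarrow> complex^'n) \<Rightarrow> complex^'m \<Rightarrow> complex^'m^'n \<Rightarrow> complex^'m^'n" where
  "tensor_act br \<rho> \<xi> T =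
     (\<Sum>j\<in>UNIV. tensor (\<rho> \<xi> (\<chi> i. T$i$j)) (axis j 1) + tensor (\<chi> i. T$i$j) (br \<xi> (axis j 1)))"

definition overshears :: "('m::finite) lie_bracket \<Rightarrow> (complex^'m \<Rightarrow> complex^'n::finite \<Rightarrow> complex^'n) \<Rightarrow> (complex^'m^'n) set" where
  "overshears br \<rho> = {tensor w \<xi> | w \<xi>. \<rho> \<xi> (\<rho> \<xi> w) = 0}"

text \<open>Complex scalar multiplication on W (x) g and complex subspaces of W (x) g.\<close>
definition tscale :: "complex \<Rightarrow> complex^'m::finite^'n::finite \<Rightarrow> complex^'m^'n" where
  "tscale c T = (\<chi> i j. c * T$i$j)"

definition tensor_subspace :: "(complex^'m::finite^'n::finite) set \<Rightarrow> bool" where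
  "tensor_subspace M \<longleftrightarrow> 0 \<in> M \<and> (\<forall>S\<in>M. \<forall>T\<in>M. S + T \<in> M) \<and> (\<forall>c. \<forall>T\<in>M. tscale c T \<in> M)"

text \<open>g-submodule of W (x) g generated by a set S.\<close>
definition generated_submodule :: "('m::finite) lie_bracket \<Rightarrow> (complex^'m \<Rightarrow> complex^'n::finite \<Rightarrow> complex^'n) \<Rightarrow> (complex^'m^'n) set \<Rightarrow> (complex^'m^'n) set" where
  "generated_submodule br \<rho> S =
     \<Inter>{M. tensor_subspace M \<and> S \<subseteq> M \<and> (\<forall>\<xi>. \<forall>T\<in>M. tensor_act br \<rho> \<xi> T \<in> M)}"

text \<open>A (x) B as the span of pure tensors a (x) b.\<close>
definition tensor_span :: "(complex^'n::finite) set \<Rightarrow> (complex^'m::finite) set \<Rightarrow> (complex^'m^'n) set" where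
  "tensor_span A B = \<Inter>{M. tensor_subspace M \<and> {tensor w H | w H. w \<in> A \<and> H \<in> B} \<subseteq> M}"

end

theory Submission
  imports Defs
begin

lemma tensor_comp[simp]: "(tensor x y)$i$j = x$i * y$j"
  by (simp add: tensor_def)
lemma tscale_comp[simp]: "(tscale c T)$i$j = c * T$i$j"
  by (simp add: tscale_def)

lemma tensor_add_left: "tensor (x + y) \<eta> = tensor x \<eta> + tensor y \<eta>"
  by (simp add: vec_eq_iff algebra_simps)
lemma tensor_scale_left: "tensor (c *s x) \<eta> = tscale c (tensor x \<eta>)"
  by (simp add: vec_eq_iff algebra_simps)
lemma tscale_add: "tscale c (S + T) = tscale c S + tscale c T"
  by (simp add: vec_eq_iff algebra_simps)

lemma act_add:
  assumes lin1: "Vector_Spaces.linear (*s) (*s) (\<rho> \<xi>)"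
  shows "tensor_act br \<rho> \<xi> (S + T) = tensor_act br \<rho> \<xi> S + tensor_act br \<rho> \<xi> T"
proof -
  have col: "(\<chi> i. (S + T)$i$j) = (\<chi> i. S$i$j) + (\<chi> i. T$i$j)" for j
    by (simp add: vec_eq_iff)
  show ?thesis
    unfolding tensor_act_def col vec.linear_add[OF lin1] tensor_add_left
    by (simp add: sum.distrib algebra_simps)
qed

lemma act_scale:
  assumes lin1: "Vector_Spaces.linear (*s) (*s) (\<rho> \<xi>)"
  shows "tensor_act br \<rho> \<xi> (tscale c T) = tscale c (tensor_act br \<rho> \<xi> T)"
proof -
  have col: "(\<chi> i. (tscale c T)$i$j) = c *s (\<chi> i. T$i$j)" for j
    by (simp add: vec_eq_iff)
  have ts: "tscale c (\<Sum>j\<in>A. f j) = (\<Sum>j\<in>A. tscale c (f j))" for A f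
    by (simp add: vec_eq_iff tscale_def sum_component sum_distrib_left)
  show ?thesis
    unfolding tensor_act_def col vec.linear_scale[OF lin1] tensor_scale_left ts tscale_add
    by simp
qed

lemma sum_axis: "(\<Sum>j\<in>UNIV. f j * (axis j (1::complex) :: complex^'m::finite)$b) = f b"
proof -
  have "(\<Sum>j\<in>UNIV. f j * (axis j (1::complex) :: complex^'m)$b) = (\<Sum>j\<in>UNIV. if j = b then f j else 0)"
    by (rule sum.cong) (auto simp: axis_def)
  also have "\<dots> = f b" by simp
  finally show ?thesis .
qed

lemma act_tensor:
  fixes x :: "complex^'n::finite" and \<eta> :: "complex^'m::finite"
  assumes lin1: "Vector_Spaces.linear (*s) (*s) (\<rho> \<xi>)"
    and lin2: "Vector_Spaces.linear (*s) (*s) (br \<xi>)"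
  shows "tensor_act br \<rho> \<xi> (tensor x \<eta>) = tensor (\<rho> \<xi> x) \<eta> + tensor x (br \<xi> \<eta>)"
proof -
  have col: "(\<chi> i. (tensor x \<eta>)$i$j) = \<eta>$j *s x" for j
    by (simp add: vec_eq_iff mult.commute)
  have "(tensor_act br \<rho> \<xi> (tensor x \<eta>))$a$b = (\<rho> \<xi> x)$a * \<eta>$b + x$a * (br \<xi> \<eta>)$b" for a b
  proof -
    have "(tensor_act br \<rho> \<xi> (tensor x \<eta>))$a$b = (\<Sum>j\<in>UNIV. (\<rho> \<xi> (\<eta>$j *s x))$a * (axis j 1 :: complex^'m)$b + (\<eta>$j *s x)$a * (br \<xi> (axis j 1))$b)"
      unfolding tensor_act_def col unfolding sum_component vector_add_component tensor_comp ..
    also have "\<dots> = (\<Sum>j\<in>UNIV. ((\<rho> \<xi> x)$a * \<eta>$j) * (axis j 1 :: complex^'m)$b) + (\<Sum>j\<in>UNIV. x$a * (\<eta>$j * (br \<xi> (axis j 1))$b))"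
      unfolding sum.distrib[symmetric] vec.linear_scale[OF lin1] vector_smult_component
      by (rule sum.cong) (simp_all only: mult.commute mult.left_commute)
    also have "(\<Sum>j\<in>UNIV. ((\<rho> \<xi> x)$a * \<eta>$j) * (axis j 1 :: complex^'m)$b) = (\<rho> \<xi> x)$a * \<eta>$b"
      by (rule sum_axis)
    also have "(\<Sum>j\<in>UNIV. x$a * (\<eta>$j * (br \<xi> (axis j 1))$b)) = x$a * (br \<xi> \<eta>)$b"
      unfolding sum_distrib_left[symmetric] using linear_componentwise[OF lin2, of \<eta> b] by simp
    finally show ?thesis .
  qed
  then show ?thesis by (simp add: vec_eq_iff)
qed

lemma tensor_scale_right: "tensor x (c *s \<eta>) = tscale c (tensor x \<eta>)"
  by (simp add: vec_eq_iff algebra_simps)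
lemma tensor_zero_right[simp]: "tensor x 0 = 0"
  by (simp add: vec_eq_iff)
lemma tensor_zero_left[simp]: "tensor 0 y = 0"
  by (simp add: vec_eq_iff)

lemma gs_add: "S \<in> generated_submodule br \<rho> X \<Longrightarrow> T \<in> generated_submodule br \<rho> X \<Longrightarrow> S + T \<in> generated_submodule br \<rho> X"
  unfolding generated_submodule_def tensor_subspace_def by blast
lemma gs_scale: "T \<in> generated_submodule br \<rho> X \<Longrightarrow> tscale c T \<in> generated_submodule br \<rho> X"
  unfolding generated_submodule_def tensor_subspace_def by blast
lemma gs_act: "T \<in> generated_submodule br \<rho> X \<Longrightarrow> tensor_act br \<rho> \<xi> T \<in> generated_submodule br \<rho> X"
  unfolding generated_submodule_def tensor_subspace_def by blast
lemma gs_base: "T \<in> X \<Longrightarrow> T \<in> generated_submodule br \<rho> X"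
  unfolding generated_submodule_def tensor_subspace_def by blast
lemma gs_subspace: "tensor_subspace (generated_submodule br \<rho> X)"
  unfolding tensor_subspace_def by (auto intro: gs_add gs_scale simp: generated_submodule_def tensor_subspace_def)
lemma gs_diff: "S \<in> generated_submodule br \<rho> X \<Longrightarrow> T \<in> generated_submodule br \<rho> X \<Longrightarrow> S - T \<in> generated_submodule br \<rho> X"
proof -
  assume a: "S \<in> generated_submodule br \<rho> X" "T \<in> generated_submodule br \<rho> X"
  have "S - T = S + tscale (-1) T" by (simp add: vec_eq_iff)
  then show ?thesis using a gs_add gs_scale by metis
qed
lemma gs_over: "\<rho> \<xi> (\<rho> \<xi> w) = 0 \<Longrightarrow> tensor w \<xi> \<in> generated_submodule br \<rho> (overshears br \<rho>)"
  by (rule gs_base) (auto simp: overshears_def)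

lemma lie_lin1: "lie_algebra br \<Longrightarrow> Vector_Spaces.linear (*s) (*s) (br x)"
  by (simp add: lie_algebra_def)
lemma lie_lin2: "lie_algebra br \<Longrightarrow> Vector_Spaces.linear (*s) (*s) (\<lambda>x. br x y)"
  by (simp add: lie_algebra_def)

lemma lie_antisym:
  assumes "lie_algebra br" shows "br y x = - br x y"
proof -
  have l1: "br (a + b) c = br a c + br b c" for a b c
    using vec.linear_add[OF lie_lin2[OF assms, of c]] by simp
  have l2: "br a (b + c) = br a b + br a c" for a b c
    using vec.linear_add[OF lie_lin1[OF assms, of a]] by simp
  have z: "br a a = 0" for a using assms by (simp add: lie_algebra_def)
  have "0 = br (x + y) (x + y)" using z by simp
  also have "\<dots> = br x x + br y x + (br x y + br y y)" by (simp only: l1 l2)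
  also have "\<dots> = br x y + br y x" by (simp add: z)
  finally show ?thesis by (metis add.commute eq_neg_iff_add_eq_0)
qed

lemma rep_lin1: "representation br \<rho> \<Longrightarrow> Vector_Spaces.linear (*s) (*s) (\<rho> x)"
  by (simp add: representation_def)
lemma rep_lin2: "representation br \<rho> \<Longrightarrow> Vector_Spaces.linear (*s) (*s) (\<lambda>x. \<rho> x w)"
  by (simp add: representation_def)
lemma rep_br: "representation br \<rho> \<Longrightarrow> \<rho> (br x y) w = \<rho> x (\<rho> y w) - \<rho> y (\<rho> x w)"
  by (simp add: representation_def)


lemma funpow_linear:
  assumes "Vector_Spaces.linear (*s) (*s) (f :: complex^'n::finite \<Rightarrow> complex^'n)"
  shows "Vector_Spaces.linear (*s) (*s) (f^^d)"
proof (induction d)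
  case 0
  then show ?case using vec.linear_id by (simp add: id_def)
next
  case (Suc d)
  then show ?case using Vector_Spaces.linear_compose[OF Suc assms] by (simp add: o_def)
qed

locale sl2 =
  fixes br :: "('m::finite) lie_bracket" and \<rho> :: "complex^'m \<Rightarrow> complex^'n::finite \<Rightarrow> complex^'n"
    and E F Hh :: "complex^'m"
  assumes lie: "lie_algebra br" and rep: "representation br \<rho>"
    and HE: "br Hh E = 2 *s E" and HF: "br Hh F = (-2) *s F" and EF: "br E F = Hh"
begin

abbreviation "MM \<equiv> generated_submodule br \<rho> (overshears br \<rho>)"

lemma act: "tensor_act br \<rho> \<xi> (tensor x \<eta>) = tensor (\<rho> \<xi> x) \<eta> + tensor x (br \<xi> \<eta>)"
  by (rule act_tensor[OF rep_lin1[OF rep] lie_lin1[OF lie]])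

lemma actadd: "tensor_act br \<rho> \<xi> (S + T) = tensor_act br \<rho> \<xi> S + tensor_act br \<rho> \<xi> T"
  by (rule act_add[OF rep_lin1[OF rep]])
lemma actscale: "tensor_act br \<rho> \<xi> (tscale c T) = tscale c (tensor_act br \<rho> \<xi> T)"
  by (rule act_scale[OF rep_lin1[OF rep]])
lemma actdiff: "tensor_act br \<rho> \<xi> (S - T) = tensor_act br \<rho> \<xi> S - tensor_act br \<rho> \<xi> T"
proof -
  have e1: "S - T = S + tscale (-1) T" and e2: "tensor_act br \<rho> \<xi> S - tensor_act br \<rho> \<xi> T = tensor_act br \<rho> \<xi> S + tscale (-1) (tensor_act br \<rho> \<xi> T)"
    by (simp_all add: vec_eq_iff)
  show ?thesis by (metis e1 e2 actadd actscale)
qed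

lemma EE: "br E E = 0" and FF: "br F F = 0"
  using lie by (simp_all add: lie_algebra_def)
lemma FE: "br F E = - Hh" using lie_antisym[OF lie, of E F] EF by simp
lemma EH: "br E Hh = (-2) *s E" using lie_antisym[OF lie, of Hh E] HE
  by (simp add: vec_eq_iff)
lemma FH: "br F Hh = 2 *s F" using lie_antisym[OF lie, of Hh F] HF
  by (simp add: vec_eq_iff)

lemma linW: "Vector_Spaces.linear (*s) (*s) (\<rho> \<xi>)" by (rule rep_lin1[OF rep])
lemma rscale: "\<rho> (c *s \<xi>) x = c *s \<rho> \<xi> x"
  using vec.linear_scale[OF rep_lin2[OF rep, of x]] by simp
lemma Wscale: "\<rho> \<xi> (c *s x) = c *s \<rho> \<xi> x" by (rule vec.linear_scale[OF linW])
lemma Wzero: "\<rho> \<xi> 0 = 0" by (rule vec.linear_0[OF linW])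

lemma hA: "\<rho> Hh (\<rho> E x) = \<rho> E (\<rho> Hh x) + 2 *s \<rho> E x"
  using rep_br[OF rep, of Hh E x] HE rscale by simp
lemma hB: "\<rho> Hh (\<rho> F x) = \<rho> F (\<rho> Hh x) - 2 *s \<rho> F x"
proof -
  have "\<rho> (br Hh F) x = (-2) *s \<rho> F x" unfolding HF by (rule rscale)
  then show ?thesis using rep_br[OF rep, of Hh F x] by (simp add: vec_eq_iff algebra_simps)
qed
lemma AB: "\<rho> E (\<rho> F x) = \<rho> F (\<rho> E x) + \<rho> Hh x"
  using rep_br[OF rep, of E F x] EF by simp

lemma hBj: "\<rho> Hh x = \<mu> *s x \<Longrightarrow> \<rho> Hh (((\<rho> F)^^j) x) = (\<mu> - 2 * of_nat j) *s ((\<rho> F)^^j) x"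
proof (induction j)
  case 0 then show ?case by simp
next
  case (Suc j)
  have "\<rho> Hh (((\<rho> F)^^Suc j) x) = \<rho> F (\<rho> Hh (((\<rho> F)^^j) x)) - 2 *s \<rho> F (((\<rho> F)^^j) x)"
    by (simp add: hB)
  also have "\<dots> = \<rho> F ((\<mu> - 2 * of_nat j) *s ((\<rho> F)^^j) x) - 2 *s \<rho> F (((\<rho> F)^^j) x)"
    using Suc by simp
  also have "\<dots> = (\<mu> - 2 * of_nat (Suc j)) *s ((\<rho> F)^^Suc j) x"
    by (simp only: Wscale) (simp add: vec_eq_iff algebra_simps)
  finally show ?case .
qed

lemma hAj: "\<rho> Hh x = \<mu> *s x \<Longrightarrow> \<rho> Hh (((\<rho> E)^^j) x) = (\<mu> + 2 * of_nat j) *s ((\<rho> E)^^j) x"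
proof (induction j)
  case 0 then show ?case by simp
next
  case (Suc j)
  have "\<rho> Hh (((\<rho> E)^^Suc j) x) = \<rho> E (\<rho> Hh (((\<rho> E)^^j) x)) + 2 *s \<rho> E (((\<rho> E)^^j) x)"
    by (simp add: hA)
  also have "\<dots> = \<rho> E ((\<mu> + 2 * of_nat j) *s ((\<rho> E)^^j) x) + 2 *s \<rho> E (((\<rho> E)^^j) x)"
    using Suc by simp
  also have "\<dots> = (\<mu> + 2 * of_nat (Suc j)) *s ((\<rho> E)^^Suc j) x"
    by (simp only: Wscale) (simp add: vec_eq_iff algebra_simps)
  finally show ?case .
qed

lemma ABj:
  assumes "\<rho> E v = 0" "\<rho> Hh v = n *s v"
  shows "\<rho> E (((\<rho> F)^^Suc j) v) = (of_nat (Suc j) * (n - of_nat j)) *s ((\<rho> F)^^j) v"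
proof (induction j)
  case 0 then show ?case using assms by (simp add: AB Wzero)
next
  case (Suc j)
  have "\<rho> E (((\<rho> F)^^Suc (Suc j)) v) = \<rho> F (\<rho> E (((\<rho> F)^^Suc j) v)) + \<rho> Hh (((\<rho> F)^^Suc j) v)"
    by (simp add: AB)
  also have "\<dots> = (of_nat (Suc (Suc j)) * (n - of_nat (Suc j))) *s ((\<rho> F)^^Suc j) v"
    unfolding Suc hBj[OF assms(2)] by (simp add: Wscale) (simp add: vec_eq_iff algebra_simps)
  finally show ?case .
qed

lemma AdBd:
  assumes "\<rho> E v = 0" "\<rho> Hh v = n *s v"
  shows "((\<rho> E)^^d) (((\<rho> F)^^d) v) = (\<Prod>j<d. of_nat (Suc j) * (n - of_nat j)) *s v"
proof (induction d)
  case 0 then show ?case by simp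
next
  case (Suc d)
  have "((\<rho> E)^^Suc d) (((\<rho> F)^^Suc d) v) = ((\<rho> E)^^d) (\<rho> E (((\<rho> F)^^Suc d) v))"
    by (simp only: funpow_Suc_right o_apply)
  also have "\<dots> = (of_nat (Suc d) * (n - of_nat d)) *s ((\<rho> E)^^d) (((\<rho> F)^^d) v)"
    by (simp only: ABj[OF assms] vec.linear_scale[OF funpow_linear[OF linW]])
  finally show ?case by (simp add: Suc mult.commute)
qed


lemma gs_zero: "0 \<in> MM"
  unfolding generated_submodule_def tensor_subspace_def by blast

lemma ABj':
  assumes "\<rho> E v = 0" "\<rho> Hh v = n *s v"
  shows "\<rho> E (\<rho> F (((\<rho> F)^^j) v)) = (of_nat (Suc j) * (n - of_nat j)) *s ((\<rho> F)^^j) v"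
  using ABj[OF assms, of j] by simp

lemma string:
  assumes Av: "\<rho> E v = 0" and hv: "\<rho> Hh v = of_nat (2*m) *s v"
  shows "j \<le> m \<Longrightarrow> tensor (((\<rho> F)^^j) v) Hh \<in> MM"
proof -
  have s0: "tensor v E \<in> MM" by (rule gs_over) (simp add: Av Wzero)
  have "\<rho> E (\<rho> F v) = of_nat (2*m) *s v" by (simp add: AB Av hv Wzero)
  then have s1: "tensor (\<rho> F v) E \<in> MM" by (intro gs_over) (simp add: Wscale Av)
  have "tensor v Hh = tensor (\<rho> F v) E - tensor_act br \<rho> F (tensor v E)"
    by (simp add: act FE vec_eq_iff)
  then have y0: "tensor v Hh \<in> MM" using gs_diff[OF s1 gs_act[OF s0]] by simp
  have I1: "tensor (((\<rho> F)^^Suc j) v) Hh + tscale (2 * of_nat (Suc j)) (tensor (((\<rho> F)^^j) v) F) \<in> MM" for j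
  proof (induction j)
    case 0
    have "tensor (((\<rho> F)^^Suc 0) v) Hh + tscale (2 * of_nat (Suc 0)) (tensor (((\<rho> F)^^0) v) F)
      = tensor_act br \<rho> F (tensor v Hh)"
      by (simp add: act FH vec_eq_iff)
    then show ?case using gs_act[OF y0] by simp
  next
    case (Suc j)
    have "tensor (((\<rho> F)^^Suc (Suc j)) v) Hh + tscale (2 * of_nat (Suc (Suc j))) (tensor (((\<rho> F)^^Suc j) v) F)
      = tensor_act br \<rho> F (tensor (((\<rho> F)^^Suc j) v) Hh + tscale (2 * of_nat (Suc j)) (tensor (((\<rho> F)^^j) v) F))"
      by (simp add: actadd actscale act FH FF vec_eq_iff algebra_simps)
    then show ?case using gs_act[OF Suc] by simp
  qed
  have I2: "tensor (((\<rho> F)^^Suc j) v) E - tscale (of_nat (Suc j) / 2) (tensor (((\<rho> F)^^j) v) Hh) \<in> MM" for j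
  proof (induction j)
    case 0
    show ?case using gs_diff[OF s1 gs_scale[OF y0, of "1/2"]] by simp
  next
    case (Suc j)
    have "tensor (((\<rho> F)^^Suc (Suc j)) v) E - tscale (of_nat (Suc (Suc j)) / 2) (tensor (((\<rho> F)^^Suc j) v) Hh)
      = tensor_act br \<rho> F (tensor (((\<rho> F)^^Suc j) v) E - tscale (of_nat (Suc j) / 2) (tensor (((\<rho> F)^^j) v) Hh))
        + tscale (1/2) (tensor (((\<rho> F)^^Suc j) v) Hh + tscale (2 * of_nat (Suc j)) (tensor (((\<rho> F)^^j) v) F))"
      by (simp add: actdiff actscale act FH FE vec_eq_iff field_simps)
    then show ?case using gs_add[OF gs_act[OF Suc] gs_scale[OF I1]] by simp
  qed
  have ym: "tensor (((\<rho> F)^^m) v) Hh \<in> MM"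
    by (rule gs_over) (simp add: hBj[OF hv] Wzero)
  have desc: "tensor (((\<rho> F)^^j) v) Hh \<in> MM"
    if jm: "j < m" and yS: "tensor (((\<rho> F)^^Suc j) v) Hh \<in> MM" for j
  proof -
    define c :: complex where "c = of_nat (Suc j) * (of_nat (2*m) - of_nat j) - of_nat (Suc j)"
    have e: "(of_nat (2*m - Suc j) :: complex) = of_nat (2*m) - of_nat j - 1"
      using jm by (simp add: of_nat_diff)
    have "c = of_nat (Suc j) * of_nat (2*m - Suc j)" unfolding e c_def by (simp add: algebra_simps)
    moreover have "2*m - Suc j \<noteq> 0" using jm by simp
    ultimately have c0: "c \<noteq> 0" by (metis of_nat_eq_0_iff mult_eq_0_iff nat.distinct(1))
    have "tscale c (tensor (((\<rho> F)^^j) v) Hh) =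
      tensor_act br \<rho> E (tensor (((\<rho> F)^^Suc j) v) Hh) +
      tscale 2 (tensor (((\<rho> F)^^Suc j) v) E - tscale (of_nat (Suc j) / 2) (tensor (((\<rho> F)^^j) v) Hh))"
      by (simp add: act EH ABj'[OF Av hv] c_def vec_eq_iff algebra_simps)
    then have "tscale c (tensor (((\<rho> F)^^j) v) Hh) \<in> MM"
      using gs_add[OF gs_act[OF yS] gs_scale[OF I2]] by simp
    moreover have "tscale (1/c) (tscale c (tensor (((\<rho> F)^^j) v) Hh)) = tensor (((\<rho> F)^^j) v) Hh"
      using c0 by (simp add: vec_eq_iff tscale_def)
    ultimately show ?thesis using gs_scale by metis
  qed
  have all: "i \<le> m \<Longrightarrow> tensor (((\<rho> F)^^(m - i)) v) Hh \<in> MM" for i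
  proof (induction i)
    case 0 then show ?case using ym by simp
  next
    case (Suc i)
    have a: "m - Suc i < m" "Suc (m - Suc i) = m - i" using Suc.prems by auto
    have "tensor (((\<rho> F)^^Suc (m - Suc i)) v) Hh \<in> MM" unfolding a(2) using Suc by simp
    then show ?case by (rule desc[OF a(1)])
  qed
  assume "j \<le> m"
  then show ?thesis using all[of "m - j"] by simp
qed


end


context sl2 begin

lemma decomp:
  fixes k :: nat
  shows "\<forall>x. \<rho> Hh x = of_nat (2*k) *s x \<longrightarrow> ((\<rho> E)^^d) x = 0 \<longrightarrow> tensor x Hh \<in> MM"
proof (induction d)
  case 0 then show ?case by (simp add: gs_zero)
next
  case (Suc d)
  show ?case
  proof (intro allI impI)
    fix x
    assume hx: "\<rho> Hh x = of_nat (2*k) *s x" and nil: "((\<rho> E)^^Suc d) x = 0"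
    define v where "v = ((\<rho> E)^^d) x"
    have Av: "\<rho> E v = 0" using nil by (simp add: v_def)
    have hv: "\<rho> Hh v = of_nat (2*(k+d)) *s v"
      unfolding v_def hAj[OF hx] by (simp add: algebra_simps)
    define P :: complex where "P = (\<Prod>j<d. of_nat (Suc j) * (of_nat (2*(k+d)) - of_nat j))"
    have P0: "P \<noteq> 0"
    proof -
      have "of_nat (Suc j) * (of_nat (2*(k+d)) - of_nat j) \<noteq> (0::complex)" if "j < d" for j
      proof -
        have h1: "(of_nat (2*(k+d)) :: complex) \<noteq> of_nat j" using that by (simp only: of_nat_eq_iff) simp
        have h2: "(of_nat (Suc j) :: complex) \<noteq> 0" by (simp only: of_nat_eq_0_iff nat.distinct(1) not_False_eq_True)
        show ?thesis by (metis h1 h2 mult_eq_0_iff right_minus_eq)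
      qed
      then show ?thesis unfolding P_def by (simp add: prod_zero_iff)
    qed
    define y where "y = ((\<rho> F)^^d) v"
    define x' where "x' = x - (1/P) *s y"
    have hy: "\<rho> Hh y = of_nat (2*k) *s y"
      unfolding y_def hBj[OF hv] by (simp add: algebra_simps)
    have hx': "\<rho> Hh x' = of_nat (2*k) *s x'"
      unfolding x'_def vec.linear_diff[OF linW] Wscale hy hx by (simp add: vec_eq_iff algebra_simps)
    have lin: "Vector_Spaces.linear (*s) (*s) ((\<rho> E)^^d)" by (rule funpow_linear[OF linW])
    have "((\<rho> E)^^d) x' = v - (1/P) *s (P *s v)"
      unfolding x'_def vec.linear_diff[OF lin] vec.linear_scale[OF lin] y_def AdBd[OF Av hv]
      by (simp add: v_def P_def)
    also have "\<dots> = 0" using P0 by (simp add: vec_eq_iff)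
    finally have nil': "((\<rho> E)^^d) x' = 0" .
    have t1: "tensor x' Hh \<in> MM" using Suc.IH hx' nil' by blast
    have t2: "tensor y Hh \<in> MM" unfolding y_def by (rule string[OF Av hv]) simp
    have "x = x' + (1/P) *s y" by (simp add: x'_def)
    then have "tensor x Hh = tensor x' Hh + tscale (1/P) (tensor y Hh)"
      by (simp add: tensor_add_left tensor_scale_left)
    then show "tensor x Hh \<in> MM" using gs_add[OF t1 gs_scale[OF t2]] by simp
  qed
qed

lemma nilp:
  assumes hx: "\<rho> Hh x = \<mu> *s x"
  shows "\<exists>d. ((\<rho> E)^^d) x = 0"
proof (rule ccontr)
  assume "\<not> ?thesis"
  then have nz: "((\<rho> E)^^j) x \<noteq> 0" for j by blast
  define u where "u j = ((\<rho> E)^^j) x" for j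
  have hu: "\<rho> Hh (u j) = (\<mu> + 2 * of_nat j) *s u j" for j
    unfolding u_def by (rule hAj[OF hx])
  have unz: "u j \<noteq> 0" for j using nz by (simp add: u_def)
  have indep: "\<forall>a. (\<Sum>j\<le>m. a j *s u j) = 0 \<longrightarrow> (\<forall>j\<le>m. a j = 0)" for m
  proof (induction m)
    case 0 then show ?case using unz by auto
  next
    case (Suc m)
    show ?case
    proof (rule allI, rule impI)
      fix a
      assume S: "(\<Sum>j\<le>Suc m. a j *s u j) = 0"
      define b where "b j = a j * (\<mu> + 2 * of_nat j) - (\<mu> + 2 * of_nat (Suc m)) * a j" for j
      have "\<rho> Hh (\<Sum>j\<le>Suc m. a j *s u j) = (\<Sum>j\<le>Suc m. (a j * (\<mu> + 2 * of_nat j)) *s u j)"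
        by (simp only: vec.linear_sum[OF linW] Wscale hu vec.scale_scale)
      then have S1: "(\<Sum>j\<le>Suc m. (a j * (\<mu> + 2 * of_nat j)) *s u j) = 0" using S Wzero by simp
      have "(\<Sum>j\<le>Suc m. ((\<mu> + 2 * of_nat (Suc m)) * a j) *s u j) = (\<mu> + 2 * of_nat (Suc m)) *s (\<Sum>j\<le>Suc m. a j *s u j)"
        by (simp only: vec.scale_sum_right vec.scale_scale)
      then have S2: "(\<Sum>j\<le>Suc m. ((\<mu> + 2 * of_nat (Suc m)) * a j) *s u j) = 0"
        using S vec.scale_zero_right by metis
      have "(\<Sum>j\<le>Suc m. b j *s u j) = 0"
        using S1 S2 by (simp add: b_def vec.scale_left_diff_distrib sum_subtractf del: sum.atMost_Suc)
      moreover have "b (Suc m) = 0" by (simp add: b_def algebra_simps)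
      ultimately have "(\<Sum>j\<le>m. b j *s u j) = 0" by simp
      then have bz: "\<forall>j\<le>m. b j = 0" using Suc.IH by blast
      have az: "a j = 0" if "j \<le> m" for j
      proof -
        have "b j = a j * (2 * of_nat j - 2 * of_nat (Suc m))" by (simp add: b_def algebra_simps)
        moreover have "(2 * of_nat j :: complex) \<noteq> 2 * of_nat (Suc m)"
        proof -
          have "(of_nat (2*j)::complex) \<noteq> of_nat (2 * Suc m)" using that by (simp only: of_nat_eq_iff) simp
          then show ?thesis by (simp only: of_nat_mult of_nat_numeral not_False_eq_True)
        qed
        ultimately show ?thesis using bz that by simp
      qed
      then have "(\<Sum>j\<le>m. a j *s u j) = 0" by simp
      then have "a (Suc m) *s u (Suc m) = 0" using S by simp
      then have "a (Suc m) = 0" using unz by simp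
      then show "\<forall>j\<le>Suc m. a j = 0" using az by (auto simp: le_Suc_eq)
    qed
  qed
  define N where "N = CARD('n)"
  have inj: "inj_on u {..N}"
  proof (rule inj_onI)
    fix i j assume "u i = u j"
    then have "(\<mu> + 2 * of_nat i) *s u i = (\<mu> + 2 * of_nat j) *s u i" using hu by metis
    then have "(\<mu> + 2 * of_nat i - (\<mu> + 2 * of_nat j)) *s u i = 0"
      by (simp add: vec.scale_left_diff_distrib)
    then have "(\<mu> + 2 * of_nat i - (\<mu> + 2 * of_nat j)) = (0::complex)" using unz by simp
    then show "i = j" by simp
  qed
  have ind: "vec.independent (u ` {..N})"
    unfolding vec.independent_explicit
  proof (intro conjI allI impI ballI)
    show "finite (u ` {..N})" by simp
    fix c v assume sc: "(\<Sum>v\<in>u ` {..N}. c v *s v) = 0" and v: "v \<in> u ` {..N}"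
    have "(\<Sum>j\<le>N. c (u j) *s u j) = 0" using sc by (simp add: sum.reindex[OF inj])
    then have "\<forall>j\<le>N. c (u j) = 0" using spec[OF indep[of N], of "\<lambda>j. c (u j)"] by simp
    then show "c v = 0" using v by auto
  qed
  have "card (u ` {..N}) \<le> vec.dim (u ` {..N})" using vec.independent_bound_general[OF ind] by simp
  also have "\<dots> \<le> vec.dim (UNIV :: (complex^'n) set)" by (rule vec.dim_subset) simp
  also have "\<dots> = N" by (simp add: N_def card_cart_basis)
  finally show False using card_image[OF inj] by simp
qed

end


lemma (in sl2) key_pos:
  fixes k :: nat
  assumes "\<rho> Hh w = of_nat (2*k) *s w"
  shows "tensor w Hh \<in> MM"
proof -
  obtain d where "((\<rho> E)^^d) w = 0" using nilp[OF assms] by blast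
  then show ?thesis using decomp[of k d] assms by blast
qed

theorem lemma3p9:
  fixes br :: "('m::finite) lie_bracket"
    and \<rho> :: "complex^'m \<Rightarrow> complex^'n::finite \<Rightarrow> complex^'n"
    and h :: "(complex^'m) set"
    and lam :: "complex^'m \<Rightarrow> complex"
  assumes "semisimple br"
    and "representation br \<rho>"
    and "cartan_subalgebra br h"
    and "is_weight \<rho> h lam"
    and "\<exists>\<alpha> Ha. is_coroot br h \<alpha> Ha \<and> (\<exists>k::int. k \<noteq> 0 \<and> lam Ha = of_int (2 * k))"
  shows "tensor_span (weight_space \<rho> h lam) h \<subseteq> generated_submodule br \<rho> (overshears br \<rho>)"
proof -
  let ?M = "generated_submodule br \<rho> (overshears br \<rho>)"
  have lie: "lie_algebra br" using assms(1) by (simp add: semisimple_def)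
  have rep: "representation br \<rho>" by (rule assms(2))
  have sub: "vec.subspace h" using assms(3) by (simp add: cartan_subalgebra_def lie_subalgebra_def)
  obtain \<alpha> Ha k where cor: "is_coroot br h \<alpha> Ha" and k0: "k \<noteq> 0" and lk: "lam Ha = of_int (2 * k)"
    using assms(5) by blast
  have HaH: "Ha \<in> h" using cor by (simp add: is_coroot_def)
  obtain E F where HE: "br Ha E = 2 *s E" and HF: "br Ha F = (-2) *s F" and EF: "br E F = Ha"
    using cor unfolding is_coroot_def by blast
  have lamHa0: "lam Ha \<noteq> 0" using lk k0 by simp
  have keyHa: "tensor w Ha \<in> ?M" if w: "w \<in> weight_space \<rho> h lam" for w
  proof -
    have hw: "\<rho> Ha w = lam Ha *s w" using w HaH by (simp add: weight_space_def)
    show ?thesis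
    proof (cases "k > 0")
      case True
      interpret sl2 br \<rho> E F Ha by unfold_locales (fact lie rep HE HF EF)+
      have "lam Ha = of_nat (2 * nat k)" using lk True by simp
      then show ?thesis using key_pos[of w "nat k"] hw by simp
    next
      case False
      then have kn: "k < 0" using k0 by simp
      have negl: "br (- x) y = - br x y" for x y
        using vec.linear_neg[OF lie_lin2[OF lie, of y]] by simp
      have negr: "\<rho> (- x) y = - \<rho> x y" for x y
        using vec.linear_neg[OF rep_lin2[OF rep, of y]] by simp
      have FE: "br F E = - Ha" using lie_antisym[OF lie, of E F] EF by simp
      have a1: "br (- Ha) F = 2 *s F" using HF by (simp add: negl vec_eq_iff)
      have a2: "br (- Ha) E = (-2) *s E" using HE by (simp add: negl vec_eq_iff)
      interpret sl2 br \<rho> F E "- Ha" by unfold_locales (fact lie rep a1 a2 FE)+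
      have "\<rho> (- Ha) w = of_nat (2 * nat (- k)) *s w" using lk kn hw by (simp add: negr vec_eq_iff)
      then have "tensor w (- Ha) \<in> ?M" using key_pos[of w "nat (- k)"] by simp
      moreover have "tensor w Ha = tscale (-1) (tensor w (- Ha))" by (simp add: vec_eq_iff)
      ultimately show ?thesis using gs_scale by metis
    qed
  qed
  have pure: "tensor w H' \<in> ?M" if w: "w \<in> weight_space \<rho> h lam" and H': "H' \<in> h" for w H'
  proof -
    define c where "c = lam H' / lam Ha"
    define H0 where "H0 = H' - c *s Ha"
    have H0h: "H0 \<in> h" unfolding H0_def using sub H' HaH by (simp add: vec.subspace_diff vec.subspace_scale)
    have hw1: "\<rho> Ha w = lam Ha *s w" using w HaH by (simp add: weight_space_def)
    have hw2: "\<rho> H' w = lam H' *s w" using w H' by (simp add: weight_space_def)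
    have lin: "Vector_Spaces.linear (*s) (*s) (\<lambda>x. \<rho> x w)" by (rule rep_lin2[OF rep])
    have "\<rho> H0 w = \<rho> H' w - c *s \<rho> Ha w"
      unfolding H0_def using vec.linear_diff[OF lin] vec.linear_scale[OF lin] by simp
    also have "\<dots> = 0" unfolding hw1 hw2 c_def using lamHa0 by (simp add: vec_eq_iff)
    finally have "\<rho> H0 w = 0" .
    then have t0: "tensor w H0 \<in> ?M"
      by (intro gs_over) (simp add: vec.linear_0[OF rep_lin1[OF rep]])
    have "tensor w H' = tensor w H0 + tscale c (tensor w Ha)"
      by (simp add: H0_def vec_eq_iff algebra_simps)
    then show ?thesis using gs_add[OF t0 gs_scale[OF keyHa[OF w]]] by simp
  qed
  show ?thesis
    unfolding tensor_span_def
    by (rule Inter_lower) (use gs_subspace pure in blast)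
qed

end
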